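(* Let $\alpha\in\mathbb{N}_0$. For all $y\in C^{(2\alpha+4)}(0,\infty)$ and $x>0$, $$(-1)^{\alpha+1}x^2(x^{-1}D_x)^{2\alpha+4}\big[x^{2\alpha+2}y(x)\big]=(-1)^{\alpha+1}\sum_{i=1}^{2\alpha+4}A_i^{\alpha}x^{i-2\alpha-4}D_x^iy(x),$$ where $$A_i^{\alpha}=\frac{(\alpha+1)!}{(i-1)!}\sum_{j=\max(i,\alpha+3)}^{2\alpha+4}(-1)^{i+j}\binom{2\alpha+4}{j}\frac{(2j-i-1)!\,2^{i-2j+2\alpha+4}}{(j-\alpha-3)!\,(j-i)!}.$$
   Context: $D_x^i$ is the $i$-fold derivative; $(x^{-1}D_x)^k$ is the $k$-fold application of $y\mapsto x^{-1}y'$. *)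

theory Defs
  imports "HOL-Analysis.Analysis"
begin

definition Dn :: "nat \<Rightarrow> (real \<Rightarrow> real) \<Rightarrow> (real \<Rightarrow> real)" where
  "Dn i f = (deriv ^^ i) f"

definition Ck_on :: "nat \<Rightarrow> real set \<Rightarrow> (real \<Rightarrow> real) \<Rightarrow> bool" where
  "Ck_on k S f \<longleftrightarrow> (\<forall>i<k. \<forall>x\<in>S. Dn i f differentiable (at x)) \<and> continuous_on S (Dn k f)"

definition xinvD :: "(real \<Rightarrow> real) \<Rightarrow> (real \<Rightarrow> real)" where
  "xinvD f = (\<lambda>x. deriv f x / x)"

definition xinvD_pow :: "nat \<Rightarrow> (real \<Rightarrow> real) \<Rightarrow> (real \<Rightarrow> real)" where
  "xinvD_pow k f = (xinvD ^^ k) f"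

definition A_coeff :: "nat \<Rightarrow> nat \<Rightarrow> real" where
  "A_coeff \<alpha> i = fact (\<alpha>+1) / fact (i-1) *
     (\<Sum>j = max i (\<alpha>+3)..2*\<alpha>+4.
        (-1) ^ (i+j) * real (2*\<alpha>+4 choose j) *
        (fact (2*j-i-1) * (2::real) powi (int i - 2*int j + 2*int \<alpha> + 4))
        / (fact (j-\<alpha>-3) * fact (j-i)))"

end

theory Submission imports Defs begin

fun cc :: "int \<Rightarrow> nat \<Rightarrow> nat \<Rightarrow> real" where
  "cc p 0 i = (if i = 0 then 1 else 0)"
| "cc p (Suc k) i = of_int (p - 2*int k + int i) * cc p k i + (if i = 0 then 0 else cc p k (i - 1))"

lemma cc_zero: "k < i \<Longrightarrow> cc p k i = 0"
  by (induction k arbitrary: i) auto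

lemma Dn_Suc: "Dn (Suc i) y = deriv (Dn i y)"
  by (simp add: Dn_def)

lemma xinvD_pow_Suc: "xinvD_pow (Suc k) f = xinvD (xinvD_pow k f)"
  by (simp add: xinvD_pow_def)

lemma xinv_formula:
  assumes diff: "\<And>i x. i < K \<Longrightarrow> x > 0 \<Longrightarrow> Dn i y differentiable (at x)"
  shows "k \<le> K \<Longrightarrow> \<forall>x>0. xinvD_pow k (\<lambda>t. t powi p * y t) x
      = (\<Sum>i\<le>k. cc p k i * x powi (p - 2*int k + int i) * Dn i y x)"
proof (induction k)
  case 0
  then show ?case by (simp add: xinvD_pow_def Dn_def)
next
  case (Suc k)
  define G where "G = (\<lambda>x. \<Sum>i\<le>k. cc p k i * x powi (p - 2*int k + int i) * Dn i y x)"
  have IH: "\<forall>x>0. xinvD_pow k (\<lambda>t. t powi p * y t) x = G x" using Suc G_def by auto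
  show ?case
  proof (intro allI impI)
    fix x :: real assume x: "x > 0"
    have ev: "eventually (\<lambda>t. xinvD_pow k (\<lambda>t. t powi p * y t) t = G t) (nhds x)"
      using eventually_nhds_in_open[of "{0<..}" x] x IH
      by (auto elim!: eventually_mono)
    have dD: "\<And>i. i \<le> k \<Longrightarrow> (Dn i y has_real_derivative Dn (Suc i) y x) (at x)"
    proof -
      fix i assume "i \<le> k"
      then have "Dn i y differentiable (at x)" using diff Suc.prems x by auto
      then show "(Dn i y has_real_derivative Dn (Suc i) y x) (at x)"
        by (simp add: Dn_Suc DERIV_deriv_iff_real_differentiable)
    qed
    have dG: "(G has_real_derivative (\<Sum>i\<le>k. cc p k i * (of_int (p - 2*int k + int i) * x powi (p - 2*int k + int i - 1) * Dn i y x
          + x powi (p - 2*int k + int i) * Dn (Suc i) y x))) (at x)"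
      unfolding G_def
    proof (rule DERIV_sum)
      fix i assume i: "i \<in> {..k}"
      define q where "q = p - 2*int k + int i"
      have h1: "((\<lambda>x. x powi q) has_real_derivative of_int q * x powi (q - 1) * 1) (at x)"
        by (rule DERIV_power_int[OF DERIV_ident]) (use x in auto)
      have "((\<lambda>x. cc p k i * (x powi q * Dn i y x)) has_real_derivative
          cc p k i * (of_int q * x powi (q - 1) * 1 * Dn i y x + Dn (Suc i) y x * x powi q)) (at x)"
        by (intro DERIV_cmult DERIV_mult h1 dD) (use i in auto)
      then show "((\<lambda>x. cc p k i * x powi (p - 2*int k + int i) * Dn i y x) has_real_derivative
          cc p k i * (of_int (p - 2*int k + int i) * x powi (p - 2*int k + int i - 1) * Dn i y x
          + x powi (p - 2*int k + int i) * Dn (Suc i) y x)) (at x)"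
        unfolding q_def by (simp add: algebra_simps)
    qed
    have "xinvD_pow (Suc k) (\<lambda>t. t powi p * y t) x = deriv G x / x"
      by (simp add: xinvD_pow_Suc xinvD_def deriv_cong_ev[OF ev refl])
    also have "\<dots> = (\<Sum>i\<le>k. cc p k i * (of_int (p - 2*int k + int i) * x powi (p - 2*int k + int i - 2) * Dn i y x
          + x powi (p - 2*int k + int i - 1) * Dn (Suc i) y x))"
      unfolding DERIV_imp_deriv[OF dG] sum_divide_distrib
    proof (rule sum.cong[OF refl])
      fix i
      have a: "x powi (q - 1) / x = x powi (q - 2)" for q
      proof -
        have "x powi ((q-1) - 1) = x powi (q-1) / x powi 1" by (rule power_int_diff) (use x in auto)
        then show ?thesis by (simp add: algebra_simps)
      qed
      have gen: "cc p k i * (of_int q * x powi (q - 1) * Dn i y x + x powi q * Dn (Suc i) y x) / x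
          = cc p k i * (of_int q * x powi (q - 2) * Dn i y x + x powi (q - 1) * Dn (Suc i) y x)" for q
      proof -
        have e1: "x powi (q-1) = x powi (q-2) * x" using a[of q] x by (simp add: field_simps)
        have e2: "x powi q = x powi (q-1) * x" using a[of "q+1"] x by (simp add: field_simps)
        show ?thesis unfolding e2 unfolding e1 using x by (simp add: field_simps)
      qed
      show "cc p k i * (of_int (p - 2*int k + int i) * x powi (p - 2*int k + int i - 1) * Dn i y x
          + x powi (p - 2*int k + int i) * Dn (Suc i) y x) / x =
          cc p k i * (of_int (p - 2*int k + int i) * x powi (p - 2*int k + int i - 2) * Dn i y x
          + x powi (p - 2*int k + int i - 1) * Dn (Suc i) y x)"
        by (rule gen)
    qed
    also have "\<dots> = (\<Sum>i\<le>Suc k. cc p (Suc k) i * x powi (p - 2*int (Suc k) + int i) * Dn i y x)"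
    proof -
      have s1: "(\<Sum>i\<le>Suc k. of_int (p - 2*int k + int i) * cc p k i * x powi (p - 2*int (Suc k) + int i) * Dn i y x)
          = (\<Sum>i\<le>k. cc p k i * of_int (p - 2*int k + int i) * x powi (p - 2*int k + int i - 2) * Dn i y x)"
        by (simp add: cc_zero algebra_simps)
      have s2: "(\<Sum>i\<le>Suc k. (if i = 0 then 0 else cc p k (i - 1)) * x powi (p - 2*int (Suc k) + int i) * Dn i y x)
          = (\<Sum>i\<le>k. cc p k i * x powi (p - 2*int k + int i - 1) * Dn (Suc i) y x)"
        by (subst sum.atMost_Suc_shift) (simp add: algebra_simps)
      show ?thesis
        apply (simp only: cc.simps distrib_right sum.distrib s1 s2)
        apply (simp only: sum.distrib[symmetric])
        apply (rule sum.cong)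
         apply (auto simp: algebra_simps)
        done
    qed
    finally show "xinvD_pow (Suc k) (\<lambda>t. t powi p * y t) x = (\<Sum>i\<le>Suc k. cc p (Suc k) i * x powi (p - 2*int (Suc k) + int i) * Dn i y x)" .
  qed
qed


fun ee :: "nat \<Rightarrow> nat \<Rightarrow> real" where
  "ee m 0 = 1"
| "ee m (Suc n) = (2*real m - 2*real n) * ee m n"

fun bb :: "nat \<Rightarrow> nat \<Rightarrow> real" where
  "bb 0 r = (if r = 0 then 1 else 0)"
| "bb (Suc j) r = (real r - 2*real j) * bb j r + (if r = 0 then 0 else bb j (r - 1))"

lemma conv: "cc (2*int m) k r = (\<Sum>j\<le>k. real (k choose j) * ee m (k-j) * bb j r)"
proof (induction k arbitrary: r)
  case 0
  then show ?case by simp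
next
  case (Suc k)
  define X where "X = (\<lambda>j. ee m (k-j) * bb (Suc j) r)"
  have T: "ee m (Suc k) * bb 0 r + (\<Sum>j\<le>k. real (k choose Suc j) * X j)
      = (\<Sum>j\<le>k. real (k choose j) * ee m (Suc k - j) * bb j r)"
  proof -
    have "(\<Sum>j\<le>k. real (k choose j) * ee m (Suc k - j) * bb j r)
        = (\<Sum>j\<le>Suc k. real (k choose j) * ee m (Suc k - j) * bb j r)" by simp
    also have "\<dots> = ee m (Suc k) * bb 0 r + (\<Sum>j\<le>k. real (k choose Suc j) * X j)"
      by (subst sum.atMost_Suc_shift) (simp add: X_def mult.assoc)
    finally show ?thesis by simp
  qed
  have "(\<Sum>j\<le>Suc k. real (Suc k choose j) * ee m (Suc k - j) * bb j r)
      = ee m (Suc k) * bb 0 r + (\<Sum>j\<le>k. real (Suc k choose Suc j) * X j)"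
    by (subst sum.atMost_Suc_shift) (simp add: X_def mult.assoc)
  also have "\<dots> = ee m (Suc k) * bb 0 r + (\<Sum>j\<le>k. real (k choose Suc j) * X j) + (\<Sum>j\<le>k. real (k choose j) * X j)"
    by (simp add: sum.distrib algebra_simps)
  also have "\<dots> = (\<Sum>j\<le>k. real (k choose j) * (ee m (Suc k - j) * bb j r + X j))"
    unfolding T by (simp add: sum.distrib algebra_simps)
  also have "\<dots> = (\<Sum>j\<le>k. real (k choose j) * ee m (k-j) *
       ((2*real m - 2*real k + real r) * bb j r + (if r = 0 then 0 else bb j (r - 1))))"
  proof (rule sum.cong[OF refl])
    fix j assume "j \<in> {..k}"
    then have j: "j \<le> k" by simp
    then have "Suc k - j = Suc (k - j)" by simp
    then show "real (k choose j) * (ee m (Suc k - j) * bb j r + X j) = real (k choose j) * ee m (k-j) *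
       ((2*real m - 2*real k + real r) * bb j r + (if r = 0 then 0 else bb j (r - 1)))"
      using j by (simp add: X_def of_nat_diff algebra_simps)
  qed
  also have "\<dots> = (2*real m - 2*real k + real r) * (\<Sum>j\<le>k. real (k choose j) * ee m (k-j) * bb j r)
      + (if r = 0 then 0 else (\<Sum>j\<le>k. real (k choose j) * ee m (k-j) * bb j (r - 1)))"
    by (cases "r = 0") (simp_all add: sum_distrib_left flip: sum.distrib; rule sum.cong; simp add: algebra_simps)+
  also have "\<dots> = cc (2*int m) (Suc k) r"
    by (simp only: Suc.IH[symmetric] cc.simps) simp
  finally show ?case by simp
qed


lemma ee_closed: "ee m n = (if n \<le> m then 2^n * fact m / fact (m - n) else 0)"
proof (induction n)
  case 0 then show ?case by simp
next
  case (Suc n)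
  show ?case
  proof (cases "Suc n \<le> m")
    case True
    then have f: "fact (m - n) = real (m - n) * (fact (m - Suc n) :: real)"
      by (metis Suc_diff_Suc fact_Suc of_nat_fact Suc_le_lessD)
    have "real (m - n) = real m - real n" using True by simp
    then show ?thesis using True Suc.IH f by (simp add: field_simps)
  next
    case False
    then show ?thesis using Suc.IH by (cases "n = m") auto
  qed
qed

lemma bb_above: "j < i \<Longrightarrow> bb j i = 0"
  by (induction j arbitrary: i) auto

lemma bb_diag: "bb j j = 1"
  by (induction j) (auto simp: bb_above)

lemma bb_zero: "bb (Suc j) 0 = 0"
  by (induction j) auto

definition BB :: "nat \<Rightarrow> nat \<Rightarrow> real" where
  "BB s d = (-1)^d * fact (s + 2*d) / (2^d * fact s * fact d)"

lemma BB_rec0: "BB 0 (Suc d) = - (1 + 2*real d) * BB 0 d"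
proof -
  have f: "fact (2 * Suc d) = (2*real d+2) * (2*real d+1) * (fact (2*d) :: real)"
    by (simp add: fact_Suc algebra_simps)
  have g: "fact (Suc d) = (real d + 1) * (fact d :: real)" by (simp add: fact_Suc algebra_simps)
  have p: "(real d + 1) \<noteq> 0" "1 + real d \<noteq> 0" "fact d \<noteq> (0::real)" by auto
  show ?thesis unfolding BB_def
    apply (simp only: f g add_0 power_Suc fact_0)
    using p by (simp add: divide_simps) (simp add: algebra_simps)
qed

lemma BB_rec: "BB (Suc s) (Suc d) = - (real s + 2 + 2*real d) * BB (Suc s) d + BB s (Suc d)"
proof -
  have f1: "fact (Suc s + 2 * Suc d) = (real s+2*real d+3) * (real s+2*real d+2) * (fact (s + 1 + 2*d) :: real)"
    by (simp add: fact_Suc algebra_simps)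
  have f2: "fact (s + 2 * Suc d) = (real s+2*real d+2) * (fact (s + 1 + 2*d) :: real)"
    by (simp add: fact_Suc algebra_simps)
  have f3: "fact (Suc s + 2 * d) = (fact (s + 1 + 2*d) :: real)" by simp
  have g1: "fact (Suc s) = (real s + 1) * (fact s :: real)" by (simp add: fact_Suc algebra_simps)
  have g2: "fact (Suc d) = (real d + 1) * (fact d :: real)" by (simp add: fact_Suc algebra_simps)
  have p: "(real d + 1) \<noteq> 0" "(real s + 1) \<noteq> 0" "1 + real d \<noteq> 0" "1 + real s \<noteq> 0" "fact d \<noteq> (0::real)" "fact s \<noteq> (0::real)" by auto
  show ?thesis unfolding BB_def
    apply (simp only: f1 f2 f3 g1 g2 power_Suc)
    using p by (simp add: divide_simps) (simp add: algebra_simps)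
qed

lemma bb_closed: "bb (Suc s + d) (Suc s) = BB s d"
proof (induction d arbitrary: s)
  case 0
  then show ?case by (simp add: bb_diag BB_def)
next
  case (Suc d)
  note outer = Suc.IH
  show ?case
  proof (induction s)
    case 0
    have e: "Suc 0 + Suc d = Suc (Suc 0 + d)" by simp
    have "bb (Suc 0 + Suc d) (Suc 0) = - (1 + 2*real d) * bb (Suc 0 + d) (Suc 0)"
      unfolding e by (subst bb.simps(2)) (simp del: bb.simps add: bb_zero)
    then show ?case using outer[of 0] BB_rec0 by simp
  next
    case (Suc s)
    have e: "Suc (Suc s) + Suc d = Suc (Suc (Suc s) + d)" by simp
    have e2: "Suc (Suc s) + d = Suc s + Suc d" by simp
    have "bb (Suc (Suc s) + Suc d) (Suc (Suc s)) = - (real s + 2 + 2*real d) * bb (Suc (Suc s) + d) (Suc (Suc s))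
        + bb (Suc s + Suc d) (Suc s)"
      unfolding e by (subst bb.simps(2)) (simp add: e2 algebra_simps)
    then show ?case using Suc.IH outer[of "Suc s"] BB_rec by simp
  qed
qed


lemma cc_N0: "cc (2*int (\<alpha>+1)) (2*\<alpha>+4) 0 = 0"
proof -
  have "cc (2*int (\<alpha>+1)) (2*\<alpha>+4) 0 = (\<Sum>j\<le>2*\<alpha>+4. real ((2*\<alpha>+4) choose j) * ee (\<alpha>+1) (2*\<alpha>+4-j) * bb j 0)"
    by (rule conv)
  also have "\<dots> = 0"
  proof (rule sum.neutral, rule ballI)
    fix j assume "j \<in> {..2*\<alpha>+4}"
    show "real ((2*\<alpha>+4) choose j) * ee (\<alpha>+1) (2*\<alpha>+4-j) * bb j 0 = 0"
    proof (cases j)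
      case 0 then show ?thesis by (simp add: ee_closed)
    next
      case (Suc j') then show ?thesis by (simp del: bb.simps add: bb_zero)
    qed
  qed
  finally show ?thesis .
qed

lemma cc_Ni:
  assumes i: "1 \<le> i" "i \<le> 2*\<alpha>+4"
  shows "cc (2*int (\<alpha>+1)) (2*\<alpha>+4) i = A_coeff \<alpha> i"
proof -
  let ?N = "2*\<alpha>+4"
  let ?g = "\<lambda>j. real (?N choose j) * ee (\<alpha>+1) (?N-j) * bb j i"
  have "cc (2*int (\<alpha>+1)) ?N i = (\<Sum>j\<le>?N. ?g j)" by (rule conv)
  also have "\<dots> = (\<Sum>j = max i (\<alpha>+3)..?N. ?g j)"
  proof (rule sum.mono_neutral_right)
    show "finite {..?N}" by simp
    show "{max i (\<alpha>+3)..?N} \<subseteq> {..?N}" by auto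
    show "\<forall>j\<in>{..?N} - {max i (\<alpha>+3)..?N}. ?g j = 0"
    proof
      fix j assume "j \<in> {..?N} - {max i (\<alpha>+3)..?N}"
      then have "j < i \<or> j < \<alpha>+3" by auto
      then show "?g j = 0"
      proof
        assume "j < i" then show ?thesis by (simp add: bb_above)
      next
        assume "j < \<alpha>+3" then show ?thesis by (simp add: ee_closed)
      qed
    qed
  qed
  also have "\<dots> = A_coeff \<alpha> i"
    unfolding A_coeff_def sum_distrib_left
  proof (rule sum.cong[OF refl])
    fix j assume "j \<in> {max i (\<alpha>+3)..?N}"
    then have j: "i \<le> j" "\<alpha>+3 \<le> j" "j \<le> ?N" by auto
    have ee: "ee (\<alpha>+1) (?N-j) = 2^(?N-j) * fact (\<alpha>+1) / fact (j-\<alpha>-3)"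
    proof -
      have "\<alpha>+1 - (?N-j) = j-\<alpha>-3" using j by simp
      then show ?thesis using j by (simp add: ee_closed)
    qed
    have bb: "bb j i = (-1)^(j-i) * fact (2*j-i-1) / (2^(j-i) * fact (i-1) * fact (j-i))"
    proof -
      have e: "j = Suc (i-1) + (j-i)" using j i by simp
      have e2: "i - 1 + 2*(j-i) = 2*j-i-1" using j i by simp
      have "bb j i = BB (i-1) (j-i)" using bb_closed[of "i-1" "j-i"] e i by simp
      then show ?thesis unfolding BB_def e2 .
    qed
    have sg: "(-1::real)^(i+j) = (-1)^(j-i)"
    proof -
      have h: "i + j = (j - i) + 2*i" using j by simp
      show ?thesis by (simp only: h power_add power_mult) simp
    qed
    have pw: "(2::real) powi (int i - 2*int j + 2*int \<alpha> + 4) = 2^(?N-j) / 2^(j-i)"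
    proof -
      have "int i - 2*int j + 2*int \<alpha> + 4 = int (?N-j) - int (j-i)" using j by simp
      then show ?thesis by (simp add: power_int_diff)
    qed
    show "?g j = fact (\<alpha>+1) / fact (i-1) *
        ((-1) ^ (i+j) * real (?N choose j) *
        (fact (2*j-i-1) * (2::real) powi (int i - 2*int j + 2*int \<alpha> + 4))
        / (fact (j-\<alpha>-3) * fact (j-i)))"
      unfolding ee bb sg pw by (simp add: divide_simps)
  qed
  finally show ?thesis .
qed

theorem corollary5p2:
  fixes \<alpha> :: nat and y :: "real \<Rightarrow> real" and x :: real
  assumes "Ck_on (2*\<alpha>+4) {0<..} y"
    and "x > 0"
  shows "(-1) ^ (\<alpha>+1) * x^2 * xinvD_pow (2*\<alpha>+4) (\<lambda>t. t ^ (2*\<alpha>+2) * y t) x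
       = (-1) ^ (\<alpha>+1) * (\<Sum>i = 1..2*\<alpha>+4.
            A_coeff \<alpha> i * x powi (int i - 2*int \<alpha> - 4) * Dn i y x)"
proof -
  let ?N = "2*\<alpha>+4"
  let ?p = "2*int (\<alpha>+1)"
  have diff: "\<And>i x. i < ?N \<Longrightarrow> x > 0 \<Longrightarrow> Dn i y differentiable (at x)"
    using assms(1) unfolding Ck_on_def by auto
  have fe: "(\<lambda>t. t ^ (2*\<alpha>+2) * y t) = (\<lambda>t::real. t powi ?p * y t)"
  proof
    fix t :: real
    have "?p = int (2*\<alpha>+2)" by simp
    then show "t ^ (2*\<alpha>+2) * y t = t powi ?p * y t" by (simp only: power_int_of_nat)
  qed
  have F: "xinvD_pow ?N (\<lambda>t. t ^ (2*\<alpha>+2) * y t) x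
      = (\<Sum>i\<le>?N. cc ?p ?N i * x powi (?p - 2*int ?N + int i) * Dn i y x)"
    unfolding fe using xinv_formula[OF diff, of ?N ?N ?p] assms(2) by blast
  have "x^2 * (\<Sum>i\<le>?N. cc ?p ?N i * x powi (?p - 2*int ?N + int i) * Dn i y x)
      = x^2 * (\<Sum>i=0..?N. cc ?p ?N i * x powi (?p - 2*int ?N + int i) * Dn i y x)"
    by (simp add: atMost_atLeast0)
  also have "\<dots> = x^2 * (\<Sum>i=1..?N. cc ?p ?N i * x powi (?p - 2*int ?N + int i) * Dn i y x)"
    by (subst sum.atLeast_Suc_atMost) (simp_all add: cc_N0[of \<alpha>, simplified])
  also have "\<dots> = (\<Sum>i = 1..?N. A_coeff \<alpha> i * x powi (int i - 2*int \<alpha> - 4) * Dn i y x)"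
    unfolding sum_distrib_left
  proof (rule sum.cong[OF refl])
    fix i assume "i \<in> {1..?N}"
    then have i: "1 \<le> i" "i \<le> ?N" by auto
    have e: "x^2 * x powi (?p - 2*int ?N + int i) = x powi (int i - 2*int \<alpha> - 4)"
    proof -
      have "x powi (int i - 2*int \<alpha> - 4) = x powi ((?p - 2*int ?N + int i) + 2)" by (simp add: algebra_simps)
      also have "\<dots> = x powi (?p - 2*int ?N + int i) * x powi 2"
        by (rule power_int_add) (use assms(2) in auto)
      finally show ?thesis by simp
    qed
    show "x^2 * (cc ?p ?N i * x powi (?p - 2*int ?N + int i) * Dn i y x)
        = A_coeff \<alpha> i * x powi (int i - 2*int \<alpha> - 4) * Dn i y x"
      using cc_Ni[OF i] e by (simp add: algebra_simps)
  qed
  finally show ?thesis using F by (simp add: mult.assoc)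
qed

end
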